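(* If $\widetilde{\sigma}_{AB},\widetilde{\sigma}'_{AB}\in\widetilde{S}_{AB}$ have a common upper bound, their supremum exists in $\widetilde{S}_{AB}$ and $$\widetilde{\sigma}_{AB}\sqcup_{\widetilde{S}_{AB}}\widetilde{\sigma}'_{AB}=\inf^{\widetilde{S}_{AB}}\big(\underline{\widetilde{\sigma}_{AB}}\cap\underline{\widetilde{\sigma}'_{AB}}\big),$$ where for $\sigma\in\widetilde{S}_{AB}$, $\underline{\sigma}$ denotes the set of pure states of $\widetilde{S}_{AB}$ (elements $\sigma_A\widetilde{\otimes}\sigma_B$ with $\sigma_A,\sigma_B$ pure) lying above $\sigma$.
   Context: $(\mathfrak{S}_A,\mathfrak{E}_A,\epsilon^{\mathfrak{S}_A})$, $(\mathfrak{S}_B,\mathfrak{E}_B,\epsilon^{\mathfrak{S}_B})$ are States/Effects Chu spaces valued in $\mathfrak{B}=\{\mathbf{Y},\mathbf{N},\bot\}$ (meet $\wedge$, product $\bullet$: $x\bullet\mathbf{Y}=x$, $x\bullet\mathbf{N}=\mathbf{N}$, $\bot\bullet\bot=\bot$), whose spaces of states admit a description in terms of pure states (completely meet-irreducible elements = maximal elements, generating every state as infimum). The minimal tensor product $\widetilde{S}_{AB}$ consists of the maps $\inf^{\widetilde{S}_{AB}}_{i\in I}\sigma_{i,A}\widetilde{\otimes}\sigma_{i,B}:(\mathfrak{l}_A,\mathfrak{l}_B)\mapsto\bigwedge_{i\in I}\epsilon^{\mathfrak{S}_A}_{\mathfrak{l}_A}(\sigma_{i,A})\bullet\epsilon^{\mathfrak{S}_B}_{\mathfrak{l}_B}(\sigma_{i,B})$,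 ordered pointwise; every element of $\widetilde{S}_{AB}$ is the infimum of the pure tensors of pure states above it. *)

theory Defs
  imports Main
begin

datatype B3 = Y | N | Bot

definition ble :: "B3 \<Rightarrow> B3 \<Rightarrow> bool" where
  "ble x y \<longleftrightarrow> x = Bot \<or> x = y"

text \<open>Meet of a (nonempty) set of values in B.\<close>
definition bInf :: "B3 set \<Rightarrow> B3" where
  "bInf X = (if X = {Y} then Y else if X = {N} then N else Bot)"

fun bprod :: "B3 \<Rightarrow> B3 \<Rightarrow> B3" where
  "bprod x Y = x"
| "bprod x N = N"
| "bprod Y Bot = Bot"
| "bprod N Bot = N"
| "bprod Bot Bot = Bot"

definition is_inf :: "('s \<Rightarrow> 's \<Rightarrow> bool) \<Rightarrow> 's set \<Rightarrow> 's set \<Rightarrow> 's \<Rightarrow> bool" where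
  "is_inf le S X s \<longleftrightarrow> s \<in> S \<and> (\<forall>x\<in>X. le s x) \<and> (\<forall>t\<in>S. (\<forall>x\<in>X. le t x) \<longrightarrow> le t s)"

definition is_sup :: "('s \<Rightarrow> 's \<Rightarrow> bool) \<Rightarrow> 's set \<Rightarrow> 's set \<Rightarrow> 's \<Rightarrow> bool" where
  "is_sup le S X s \<longleftrightarrow> s \<in> S \<and> (\<forall>x\<in>X. le x s) \<and> (\<forall>t\<in>S. (\<forall>x\<in>X. le x t) \<longrightarrow> le s t)"

definition maximal_elems :: "('s \<Rightarrow> 's \<Rightarrow> bool) \<Rightarrow> 's set \<Rightarrow> 's set" where
  "maximal_elems le S = {p \<in> S. \<forall>s\<in>S. le p s \<longrightarrow> s = p}"

definition cmi_elems :: "('s \<Rightarrow> 's \<Rightarrow> bool) \<Rightarrow> 's set \<Rightarrow> 's set" where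
  "cmi_elems le S = {p \<in> S. \<forall>X\<subseteq>S. is_inf le S X p \<longrightarrow> p \<in> X}"

text \<open>A States/Effects Chu space: states S (a poset in which every nonempty family
has an infimum), effects E, evaluation ev l s = epsilon_l(s), where each
epsilon_l sends infima of states to meets in B.\<close>
definition SE_chu :: "'s set \<Rightarrow> 'e set \<Rightarrow> ('e \<Rightarrow> 's \<Rightarrow> B3) \<Rightarrow> ('s \<Rightarrow> 's \<Rightarrow> bool) \<Rightarrow> bool" where
  "SE_chu S E ev le \<longleftrightarrow>
     (\<forall>s\<in>S. le s s) \<and>
     (\<forall>s\<in>S. \<forall>t\<in>S. le s t \<longrightarrow> le t s \<longrightarrow> s = t) \<and>
     (\<forall>r\<in>S. \<forall>s\<in>S. \<forall>t\<in>S. le r s \<longrightarrow> le s t \<longrightarrow> le r t) \<and>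
     (\<forall>X. X \<subseteq> S \<longrightarrow> X \<noteq> {} \<longrightarrow> (\<exists>s. is_inf le S X s)) \<and>
     (\<forall>X s. X \<subseteq> S \<longrightarrow> X \<noteq> {} \<longrightarrow> is_inf le S X s \<longrightarrow>
        (\<forall>l\<in>E. ev l s = bInf (ev l ` X)))"

definition pure_states :: "('s \<Rightarrow> 's \<Rightarrow> bool) \<Rightarrow> 's set \<Rightarrow> 's set" where
  "pure_states le S = cmi_elems le S"

definition pure_description :: "'s set \<Rightarrow> ('s \<Rightarrow> 's \<Rightarrow> bool) \<Rightarrow> bool" where
  "pure_description S le \<longleftrightarrow>
     cmi_elems le S = maximal_elems le S \<and>
     (\<forall>s\<in>S. is_inf le S {p \<in> pure_states le S. le s p} s)"

text \<open>inf_{(a,b) in F} a \<otimes> b, as a map on effect pairs (extended by Bot outside EA \<times> EB).\<close>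
definition tinf :: "'ea set \<Rightarrow> 'eb set \<Rightarrow> ('ea \<Rightarrow> 'sa \<Rightarrow> B3) \<Rightarrow> ('eb \<Rightarrow> 'sb \<Rightarrow> B3)
    \<Rightarrow> ('sa \<times> 'sb) set \<Rightarrow> ('ea \<times> 'eb \<Rightarrow> B3)" where
  "tinf EA EB evA evB F = (\<lambda>(la, lb). if la \<in> EA \<and> lb \<in> EB
      then bInf ((\<lambda>(a, b). bprod (evA la a) (evB lb b)) ` F) else Bot)"

definition ptensor :: "'ea set \<Rightarrow> 'eb set \<Rightarrow> ('ea \<Rightarrow> 'sa \<Rightarrow> B3) \<Rightarrow> ('eb \<Rightarrow> 'sb \<Rightarrow> B3)
    \<Rightarrow> 'sa \<Rightarrow> 'sb \<Rightarrow> ('ea \<times> 'eb \<Rightarrow> B3)" where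
  "ptensor EA EB evA evB a b = tinf EA EB evA evB {(a, b)}"

definition min_tensor :: "'sa set \<Rightarrow> 'ea set \<Rightarrow> ('ea \<Rightarrow> 'sa \<Rightarrow> B3) \<Rightarrow>
    'sb set \<Rightarrow> 'eb set \<Rightarrow> ('eb \<Rightarrow> 'sb \<Rightarrow> B3) \<Rightarrow> ('ea \<times> 'eb \<Rightarrow> B3) set" where
  "min_tensor SA EA evA SB EB evB =
     {tinf EA EB evA evB F | F. F \<subseteq> SA \<times> SB \<and> F \<noteq> {}}"

definition tle :: "'ea set \<Rightarrow> 'eb set \<Rightarrow> ('ea \<times> 'eb \<Rightarrow> B3) \<Rightarrow> ('ea \<times> 'eb \<Rightarrow> B3) \<Rightarrow> bool" where
  "tle EA EB f g \<longleftrightarrow> (\<forall>l \<in> EA \<times> EB. ble (f l) (g l))"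

definition pure_tensors :: "'sa set \<Rightarrow> 'ea set \<Rightarrow> ('ea \<Rightarrow> 'sa \<Rightarrow> B3) \<Rightarrow> ('sa \<Rightarrow> 'sa \<Rightarrow> bool) \<Rightarrow>
    'sb set \<Rightarrow> 'eb set \<Rightarrow> ('eb \<Rightarrow> 'sb \<Rightarrow> B3) \<Rightarrow> ('sb \<Rightarrow> 'sb \<Rightarrow> bool) \<Rightarrow> ('ea \<times> 'eb \<Rightarrow> B3) set" where
  "pure_tensors SA EA evA leA SB EB evB leB =
     {ptensor EA EB evA evB a b | a b. a \<in> pure_states leA SA \<and> b \<in> pure_states leB SB}"

definition pure_above :: "'sa set \<Rightarrow> 'ea set \<Rightarrow> ('ea \<Rightarrow> 'sa \<Rightarrow> B3) \<Rightarrow> ('sa \<Rightarrow> 'sa \<Rightarrow> bool) \<Rightarrow>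
    'sb set \<Rightarrow> 'eb set \<Rightarrow> ('eb \<Rightarrow> 'sb \<Rightarrow> B3) \<Rightarrow> ('sb \<Rightarrow> 'sb \<Rightarrow> bool) \<Rightarrow>
    ('ea \<times> 'eb \<Rightarrow> B3) \<Rightarrow> ('ea \<times> 'eb \<Rightarrow> B3) set" where
  "pure_above SA EA evA leA SB EB evB leB \<sigma> =
     {\<pi> \<in> pure_tensors SA EA evA leA SB EB evB leB. tle EA EB \<sigma> \<pi>}"

end

theory Submission
  imports Defs
begin

lemma bInf_Y: "Z \<noteq> {} \<Longrightarrow> bInf Z = Y \<longleftrightarrow> (\<forall>z\<in>Z. z = Y)"
  by (auto simp: bInf_def)

lemma bInf_N: "Z \<noteq> {} \<Longrightarrow> bInf Z = N \<longleftrightarrow> (\<forall>z\<in>Z. z = N)"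
  by (auto simp: bInf_def)

lemma B3_eqI: "(p = Y \<longleftrightarrow> q = Y) \<Longrightarrow> (p = N \<longleftrightarrow> q = N) \<Longrightarrow> p = q"
  by (cases p; cases q) auto

lemma bprod_Y: "bprod x y = Y \<longleftrightarrow> x = Y \<and> y = Y"
  by (cases x; cases y) auto

lemma bprod_N: "bprod x y = N \<longleftrightarrow> x = N \<or> y = N"
  by (cases x; cases y) auto

lemma bInf_single[simp]: "bInf {v} = v"
  by (cases v) (auto simp: bInf_def)

lemma bInf_lower: "z \<in> Z \<Longrightarrow> ble (bInf Z) z"
  by (auto simp: bInf_def ble_def)

lemma bInf_greatest: "Z \<noteq> {} \<Longrightarrow> \<forall>z\<in>Z. ble w z \<Longrightarrow> ble w (bInf Z)"
proof -
  assume ne: "Z \<noteq> {}" and h: "\<forall>z\<in>Z. ble w z"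
  show ?thesis
  proof (cases "w = Bot")
    case True then show ?thesis by (simp add: ble_def)
  next
    case False
    then have "\<forall>z\<in>Z. z = w" using h by (auto simp: ble_def)
    then have "Z = {w}" using ne by auto
    then show ?thesis by (simp add: ble_def)
  qed
qed

lemma bInf_UN:
  assumes "I \<noteq> {}" "\<forall>i\<in>I. X i \<noteq> {}"
  shows "bInf (\<Union>i\<in>I. X i) = bInf ((\<lambda>i. bInf (X i)) ` I)"
proof (rule B3_eqI)
  have ne: "(\<Union>i\<in>I. X i) \<noteq> {}" using assms by auto
  have ne2: "(\<lambda>i. bInf (X i)) ` I \<noteq> {}" using assms by auto
  show "bInf (\<Union>i\<in>I. X i) = Y \<longleftrightarrow> bInf ((\<lambda>i. bInf (X i)) ` I) = Y"
    using assms by (simp add: bInf_Y[OF ne] bInf_Y[OF ne2] bInf_Y)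
  show "bInf (\<Union>i\<in>I. X i) = N \<longleftrightarrow> bInf ((\<lambda>i. bInf (X i)) ` I) = N"
    using assms by (simp add: bInf_N[OF ne] bInf_N[OF ne2] bInf_N)
qed

lemma bInf_prod:
  assumes a: "VA \<noteq> {}" and b: "VB \<noteq> {}"
  shows "bInf {bprod x y | x y. x \<in> VA \<and> y \<in> VB} = bprod (bInf VA) (bInf VB)"
proof (rule B3_eqI)
  have ne: "{bprod x y | x y. x \<in> VA \<and> y \<in> VB} \<noteq> {}" using assms by auto
  show "bInf {bprod x y | x y. x \<in> VA \<and> y \<in> VB} = Y \<longleftrightarrow> bprod (bInf VA) (bInf VB) = Y"
  proof -
    have "(\<forall>z\<in>{bprod x y | x y. x \<in> VA \<and> y \<in> VB}. z = Y) \<longleftrightarrow> (\<forall>x\<in>VA. \<forall>y\<in>VB. x = Y \<and> y = Y)"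
      using bprod_Y by blast
    also have "\<dots> \<longleftrightarrow> (\<forall>x\<in>VA. x = Y) \<and> (\<forall>y\<in>VB. y = Y)" using assms by blast
    finally show ?thesis unfolding bInf_Y[OF ne] bprod_Y bInf_Y[OF a] bInf_Y[OF b] .
  qed
  show "bInf {bprod x y | x y. x \<in> VA \<and> y \<in> VB} = N \<longleftrightarrow> bprod (bInf VA) (bInf VB) = N"
  proof -
    have "(\<forall>z\<in>{bprod x y | x y. x \<in> VA \<and> y \<in> VB}. z = N) \<longleftrightarrow> (\<forall>x\<in>VA. \<forall>y\<in>VB. x = N \<or> y = N)"
      using bprod_N by blast
    also have "\<dots> \<longleftrightarrow> (\<forall>x\<in>VA. x = N) \<or> (\<forall>y\<in>VB. y = N)" using assms by blast
    finally show ?thesis unfolding bInf_N[OF ne] bprod_N bInf_N[OF a] bInf_N[OF b] .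
  qed
qed

lemma pure_nonempty:
  assumes chu: "SE_chu S E ev le" and pd: "pure_description S le" and a: "a \<in> S"
  shows "{p \<in> pure_states le S. le a p} \<noteq> {}"
proof
  assume e: "{p \<in> pure_states le S. le a p} = {}"
  have "is_inf le S {p \<in> pure_states le S. le a p} a" using pd a by (auto simp: pure_description_def)
  then have inf0: "is_inf le S {} a" using e by simp
  then have top: "\<forall>t\<in>S. le t a" by (simp add: is_inf_def)
  have antis: "\<forall>s\<in>S. \<forall>t\<in>S. le s t \<longrightarrow> le t s \<longrightarrow> s = t"
    using chu unfolding SE_chu_def by (elim conjE) assumption
  have "a \<in> maximal_elems le S"
    unfolding maximal_elems_def using antis top a by auto
  then have "a \<in> cmi_elems le S" using pd by (simp add: pure_description_def)
  then show False using inf0 by (auto simp: cmi_elems_def)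
qed

lemma pure_eval:
  assumes chu: "SE_chu S E ev le" and pd: "pure_description S le" and a: "a \<in> S" and l: "l \<in> E"
  shows "ev l a = bInf (ev l ` {p \<in> pure_states le S. le a p})"
proof -
  have i: "is_inf le S {p \<in> pure_states le S. le a p} a" using pd a by (auto simp: pure_description_def)
  have sub: "{p \<in> pure_states le S. le a p} \<subseteq> S" by (auto simp: pure_states_def cmi_elems_def)
  show ?thesis using chu pure_nonempty[OF chu pd a] i sub l unfolding SE_chu_def by blast
qed

lemma tle_trans: "tle EA EB f g \<Longrightarrow> tle EA EB g h \<Longrightarrow> tle EA EB f h"
  unfolding tle_def ble_def by metis

lemma ptensor_val: "la \<in> EA \<Longrightarrow> lb \<in> EB \<Longrightarrow> ptensor EA EB evA evB p q (la, lb) = bprod (evA la p) (evB lb q)"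
  by (simp add: ptensor_def tinf_def)

lemma tinf_pure:
  assumes chuA: "SE_chu SA EA evA leA" and pureA: "pure_description SA leA"
    and chuB: "SE_chu SB EB evB leB" and pureB: "pure_description SB leB"
    and F: "F \<subseteq> SA \<times> SB" "F \<noteq> {}" and l: "la \<in> EA" "lb \<in> EB"
  shows "tinf EA EB evA evB F (la, lb) = bInf {bprod (evA la p) (evB lb q) | a b p q. (a, b) \<in> F \<and>
     p \<in> pure_states leA SA \<and> leA a p \<and> q \<in> pure_states leB SB \<and> leB b q}"
proof -
  define PA where "PA a = {p \<in> pure_states leA SA. leA a p}" for a
  define PB where "PB b = {q \<in> pure_states leB SB. leB b q}" for b
  define G where "G ab = {bprod x y | x y. x \<in> evA la ` PA (fst ab) \<and> y \<in> evB lb ` PB (snd ab)}" for ab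
  have Gne: "\<forall>ab\<in>F. G ab \<noteq> {}"
    using F pure_nonempty[OF chuA pureA] pure_nonempty[OF chuB pureB]
    unfolding G_def PA_def PB_def by fastforce
  have 1: "\<And>ab. ab \<in> F \<Longrightarrow> (\<lambda>(a, b). bprod (evA la a) (evB lb b)) ab = bInf (G ab)"
  proof -
    fix ab assume ab: "ab \<in> F"
    obtain a b where e: "ab = (a, b)" by force
    have a: "a \<in> SA" and b: "b \<in> SB" using ab e F by auto
    show "(\<lambda>(a, b). bprod (evA la a) (evB lb b)) ab = bInf (G ab)"
      unfolding e G_def fst_conv snd_conv
      apply (subst bInf_prod)
      using pure_nonempty[OF chuA pureA a] pure_nonempty[OF chuB pureB b]
      by (auto simp: PA_def PB_def pure_eval[OF chuA pureA a l(1), symmetric]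
          pure_eval[OF chuB pureB b l(2), symmetric])
  qed
  have "tinf EA EB evA evB F (la, lb) = bInf ((\<lambda>(a, b). bprod (evA la a) (evB lb b)) ` F)"
    using l by (simp add: tinf_def)
  also have "\<dots> = bInf ((\<lambda>ab. bInf (G ab)) ` F)"
    using 1 by (metis (no_types, lifting) image_cong)
  also have "\<dots> = bInf (\<Union>ab\<in>F. G ab)"
    using bInf_UN[OF F(2) Gne] by simp
  also have "(\<Union>ab\<in>F. G ab) = {bprod (evA la p) (evB lb q) | a b p q. (a, b) \<in> F \<and>
     p \<in> pure_states leA SA \<and> leA a p \<and> q \<in> pure_states leB SB \<and> leB b q}"
    unfolding G_def PA_def PB_def by fastforce
  finally show ?thesis .
qed


theorem mainTheorem14:
  fixes SA :: "'sa set" and EA :: "'ea set" and evA :: "'ea \<Rightarrow> 'sa \<Rightarrow> B3"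
    and leA :: "'sa \<Rightarrow> 'sa \<Rightarrow> bool"
    and SB :: "'sb set" and EB :: "'eb set" and evB :: "'eb \<Rightarrow> 'sb \<Rightarrow> B3"
    and leB :: "'sb \<Rightarrow> 'sb \<Rightarrow> bool"
    and \<sigma> \<sigma>' :: "'ea \<times> 'eb \<Rightarrow> B3"
  assumes chuA: "SE_chu SA EA evA leA" and pureA: "pure_description SA leA"
    and chuB: "SE_chu SB EB evB leB" and pureB: "pure_description SB leB"
    and \<sigma>_in: "\<sigma> \<in> min_tensor SA EA evA SB EB evB"
    and \<sigma>'_in: "\<sigma>' \<in> min_tensor SA EA evA SB EB evB"
    and ub: "\<exists>\<tau> \<in> min_tensor SA EA evA SB EB evB. tle EA EB \<sigma> \<tau> \<and> tle EA EB \<sigma>' \<tau>"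
  shows "\<exists>u. is_sup (tle EA EB) (min_tensor SA EA evA SB EB evB) {\<sigma>, \<sigma>'} u \<and>
             is_inf (tle EA EB) (min_tensor SA EA evA SB EB evB)
               (pure_above SA EA evA leA SB EB evB leB \<sigma> \<inter> pure_above SA EA evA leA SB EB evB leB \<sigma>') u"
proof -
  let ?M = "min_tensor SA EA evA SB EB evB"
  let ?P = "pure_above SA EA evA leA SB EB evB leB \<sigma> \<inter> pure_above SA EA evA leA SB EB evB leB \<sigma>'"
  define G where "G = {(p, q). p \<in> pure_states leA SA \<and> q \<in> pure_states leB SB \<and>
      tle EA EB \<sigma> (ptensor EA EB evA evB p q) \<and> tle EA EB \<sigma>' (ptensor EA EB evA evB p q)}"
  define u where "u = tinf EA EB evA evB G"
  have psA: "pure_states leA SA \<subseteq> SA" by (auto simp: pure_states_def cmi_elems_def)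
  have psB: "pure_states leB SB \<subseteq> SB" by (auto simp: pure_states_def cmi_elems_def)
  have GS: "G \<subseteq> SA \<times> SB" using psA psB by (auto simp: G_def)
  have above: "tle EA EB (tinf EA EB evA evB F) (ptensor EA EB evA evB p q)"
    if F: "F \<subseteq> SA \<times> SB" "F \<noteq> {}" and ab: "(a, b) \<in> F" and p: "p \<in> pure_states leA SA" "leA a p"
      and q: "q \<in> pure_states leB SB" "leB b q" for F a b p q
    unfolding tle_def
  proof
    fix l assume l: "l \<in> EA \<times> EB"
    obtain la lb where e: "l = (la, lb)" and la: "la \<in> EA" and lb: "lb \<in> EB" using l by auto
    show "ble (tinf EA EB evA evB F l) (ptensor EA EB evA evB p q l)"
      unfolding e tinf_pure[OF chuA pureA chuB pureB F la lb] ptensor_val[OF la lb]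
      by (rule bInf_lower) (use ab p q in blast)
  qed
  obtain \<tau> where \<tau>: "\<tau> \<in> ?M" "tle EA EB \<sigma> \<tau>" "tle EA EB \<sigma>' \<tau>" using ub by blast
  then obtain F0 where F0: "\<tau> = tinf EA EB evA evB F0" "F0 \<subseteq> SA \<times> SB" "F0 \<noteq> {}"
    by (auto simp: min_tensor_def)
  obtain a b where ab: "(a, b) \<in> F0" using F0 by auto
  have "a \<in> SA" "b \<in> SB" using ab F0 by auto
  then obtain p q where p: "p \<in> pure_states leA SA" "leA a p" and q: "q \<in> pure_states leB SB" "leB b q"
    using pure_nonempty[OF chuA pureA] pure_nonempty[OF chuB pureB] by blast
  have "tle EA EB \<tau> (ptensor EA EB evA evB p q)"
    using above[OF F0(2,3) ab p q] F0(1) by simp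
  then have "(p, q) \<in> G" using \<tau> p q tle_trans unfolding G_def by blast
  then have Gne: "G \<noteq> {}" by auto
  have uM: "u \<in> ?M" unfolding u_def min_tensor_def using GS Gne by blast
  have u_lower: "tle EA EB u (ptensor EA EB evA evB p q)" if "(p, q) \<in> G" for p q
    unfolding tle_def
  proof
    fix l assume l: "l \<in> EA \<times> EB"
    obtain la lb where e: "l = (la, lb)" and la: "la \<in> EA" and lb: "lb \<in> EB" using l by auto
    show "ble (u l) (ptensor EA EB evA evB p q l)"
      unfolding e u_def ptensor_val[OF la lb] using la lb that
      by (auto simp: tinf_def intro!: bInf_lower)
  qed
  have u_greatest: "tle EA EB t u" if h: "\<forall>(p, q)\<in>G. tle EA EB t (ptensor EA EB evA evB p q)" for t
    unfolding tle_def
  proof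
    fix l assume l: "l \<in> EA \<times> EB"
    obtain la lb where e: "l = (la, lb)" and la: "la \<in> EA" and lb: "lb \<in> EB" using l by auto
    have "ble (t (la, lb)) (bInf ((\<lambda>(a, b). bprod (evA la a) (evB lb b)) ` G))"
    proof (rule bInf_greatest)
      show "(\<lambda>(a, b). bprod (evA la a) (evB lb b)) ` G \<noteq> {}" using Gne by auto
      show "\<forall>z\<in>(\<lambda>(a, b). bprod (evA la a) (evB lb b)) ` G. ble (t (la, lb)) z"
        using h la lb by (auto simp: tle_def ptensor_val[OF la lb, symmetric])
    qed
    then show "ble (t l) (u l)" unfolding e u_def using la lb by (simp add: tinf_def)
  qed
  have Pchar: "\<pi> \<in> ?P \<longleftrightarrow> (\<exists>(p, q)\<in>G. \<pi> = ptensor EA EB evA evB p q)" for \<pi>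
    unfolding pure_above_def pure_tensors_def G_def by blast
  have inf: "is_inf (tle EA EB) ?M ?P u"
    unfolding is_inf_def
  proof (intro conjI ballI impI)
    show "u \<in> ?M" by (rule uM)
    show "tle EA EB u x" if "x \<in> ?P" for x
    proof -
      have "\<exists>(p, q)\<in>G. x = ptensor EA EB evA evB p q" using iffD1[OF Pchar[of x] that] .
      then obtain p q where "(p, q) \<in> G" "x = ptensor EA EB evA evB p q" by blast
      then show ?thesis using u_lower[of p q] by simp
    qed
    fix t assume "t \<in> ?M" and h: "\<forall>x\<in>?P. tle EA EB t x"
    have "\<forall>(p, q)\<in>G. tle EA EB t (ptensor EA EB evA evB p q)"
    proof (intro ballI)
      fix pq assume pq: "pq \<in> G"
      obtain p q where e: "pq = (p, q)" by force
      have "ptensor EA EB evA evB p q \<in> ?P" 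
        apply (rule iffD2[OF Pchar])
        using pq unfolding e by (intro bexI[of _ "(p, q)"]) simp_all
      then show "(case pq of (p, q) \<Rightarrow> tle EA EB t (ptensor EA EB evA evB p q))"
        using h e by simp
    qed
    then show "tle EA EB t u" by (rule u_greatest)
  qed
  have su1: "tle EA EB \<sigma> u" "tle EA EB \<sigma>' u" using u_greatest unfolding G_def by auto
  have sup: "is_sup (tle EA EB) ?M {\<sigma>, \<sigma>'} u"
    unfolding is_sup_def
  proof (intro conjI ballI impI)
    show "u \<in> ?M" by (rule uM)
    show "tle EA EB x u" if "x \<in> {\<sigma>, \<sigma>'}" for x using that su1 by auto
    fix t assume tM: "t \<in> ?M" and tb: "\<forall>x\<in>{\<sigma>, \<sigma>'}. tle EA EB x t"
    obtain F where F: "t = tinf EA EB evA evB F" "F \<subseteq> SA \<times> SB" "F \<noteq> {}"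
      using tM by (auto simp: min_tensor_def)
    show "tle EA EB u t"
      unfolding tle_def
    proof
      fix l assume l: "l \<in> EA \<times> EB"
      obtain la lb where e: "l = (la, lb)" and la: "la \<in> EA" and lb: "lb \<in> EB" using l by auto
      let ?Q = "{bprod (evA la p) (evB lb q) | a b p q. (a, b) \<in> F \<and>
         p \<in> pure_states leA SA \<and> leA a p \<and> q \<in> pure_states leB SB \<and> leB b q}"
      have "ble (u (la, lb)) (bInf ?Q)"
      proof (rule bInf_greatest)
        obtain a b where ab: "(a, b) \<in> F" using F by auto
        have "a \<in> SA" "b \<in> SB" using ab F by auto
        then obtain p q where "p \<in> pure_states leA SA" "leA a p" "q \<in> pure_states leB SB" "leB b q"
          using pure_nonempty[OF chuA pureA] pure_nonempty[OF chuB pureB] by blast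
        then show "?Q \<noteq> {}" using ab by blast
        show "\<forall>z\<in>?Q. ble (u (la, lb)) z"
        proof
          fix z assume "z \<in> ?Q"
          then obtain a b p q where z: "z = bprod (evA la p) (evB lb q)" "(a, b) \<in> F"
            "p \<in> pure_states leA SA" "leA a p" "q \<in> pure_states leB SB" "leB b q" by blast
          have "tle EA EB t (ptensor EA EB evA evB p q)"
            using above[OF F(2,3) z(2-6)] F(1) by simp
          then have "(p, q) \<in> G" using tb z tle_trans unfolding G_def by blast
          then have "tle EA EB u (ptensor EA EB evA evB p q)" by (rule u_lower)
          then show "ble (u (la, lb)) z" using la lb z(1) by (auto simp: tle_def ptensor_val)
        qed
      qed
      then show "ble (u l) (t l)"
        unfolding e F(1) tinf_pure[OF chuA pureA chuB pureB F(2,3) la lb] .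
    qed
  qed
  show ?thesis using sup inf by blast
qed

end
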